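(* Let $\mathsf V$ be a quantale, $X=(X,a)$ a $\mathsf V$-category, $(x_n)_{n\in\mathbb N}$ a Cauchy sequence in $X$ and $x\in X$. Then $$\bigvee_{N}\bigwedge_{n\ge N}a(x_n,x)=\bigwedge_{N}\bigvee_{n\ge N}a(x_n,x)\quad\text{and}\quad\bigvee_{N}\bigwedge_{n\ge N}a(x,x_n)=\bigwedge_{N}\bigvee_{n\ge N}a(x,x_n).$$
   Context: A quantale $(\mathsf V,\otimes,k)$ is a complete anti-symmetric lattice with an associative, commutative operation $\otimes$ with neutral element $k$ distributing over arbitrary suprema. A $\mathsf V$-category $(X,a)$ is a set with $a:X\times X\to\mathsf V$ such that $k\le a(x,x)$ and $a(x,y)\otimes a(y,z)\le a(x,z)$. A sequence $s=(x_n)$ is Cauchy if $k\le\bigvee_{N}\bigwedge_{n,m\ge N}a(x_n,x_m)$. *)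

theory Defs
  imports Main
begin

definition quantale :: "('v::complete_lattice \<Rightarrow> 'v \<Rightarrow> 'v) \<Rightarrow> 'v \<Rightarrow> bool" where
  "quantale tensor k \<longleftrightarrow>
     (\<forall>u v w. tensor (tensor u v) w = tensor u (tensor v w)) \<and>
     (\<forall>u v. tensor u v = tensor v u) \<and>
     (\<forall>u. tensor k u = u) \<and>
     (\<forall>u S. tensor u (Sup S) = (SUP s\<in>S. tensor u s))"

definition V_category :: "('v::complete_lattice \<Rightarrow> 'v \<Rightarrow> 'v) \<Rightarrow> 'v \<Rightarrow> ('x \<Rightarrow> 'x \<Rightarrow> 'v) \<Rightarrow> bool" where
  "V_category tensor k a \<longleftrightarrow>
     (\<forall>x. k \<le> a x x) \<and> (\<forall>x y z. tensor (a x y) (a y z) \<le> a x z)"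

definition V_cauchy :: "'v::complete_lattice \<Rightarrow> ('x \<Rightarrow> 'x \<Rightarrow> 'v) \<Rightarrow> (nat \<Rightarrow> 'x) \<Rightarrow> bool" where
  "V_cauchy k a s \<longleftrightarrow> k \<le> (SUP N. INF n\<in>{N..}. INF m\<in>{N..}. a (s n) (s m))"

end

theory Submission
  imports Defs
begin

lemma q_mono:
  assumes "quantale t k" "u \<le> v"
  shows "t w u \<le> t w v"
proof -
  have "t w v = t w (Sup {u, v})" using assms(2) by (simp add: sup_absorb2)
  also have "\<dots> = (SUP x\<in>{u,v}. t w x)" using assms(1) unfolding quantale_def by blast
  also have "\<dots> = sup (t w u) (t w v)" by simp
  finally show ?thesis by (metis sup.cobounded1)
qed

lemma q_mono2:
  assumes "quantale t k" "u \<le> v" "w \<le> z"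
  shows "t u w \<le> t v z"
proof -
  have c: "\<And>x y. t x y = t y x" using assms(1) unfolding quantale_def by blast
  have "t u w \<le> t u z" using q_mono assms by blast
  also have "\<dots> = t z u" by (rule c)
  also have "\<dots> \<le> t z v" using q_mono assms by blast
  also have "\<dots> = t v z" by (rule c)
  finally show ?thesis .
qed

lemma q_supl:
  assumes "quantale t k"
  shows "t (Sup S) w = (SUP s\<in>S. t s w)"
proof -
  have c: "\<And>x y. t x y = t y x" using assms(1) unfolding quantale_def by blast
  have "t (Sup S) w = t w (Sup S)" by (rule c)
  also have "\<dots> = (SUP s\<in>S. t w s)" using assms unfolding quantale_def by blast
  also have "\<dots> = (SUP s\<in>S. t s w)" by (simp add: c)
  finally show ?thesis .
qed

lemma liminf_le_limsup:
  fixes f :: "nat \<Rightarrow> 'v::complete_lattice"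
  shows "(SUP N. INF n\<in>{N..}. f n) \<le> (INF N. SUP n\<in>{N..}. f n)"
proof (rule SUP_least, rule INF_greatest)
  fix N M :: nat
  have "(INF n\<in>{N..}. f n) \<le> f (max N M)" by (rule INF_lower) simp
  also have "\<dots> \<le> (SUP n\<in>{M..}. f n)" by (rule SUP_upper) simp
  finally show "(INF n\<in>{N..}. f n) \<le> (SUP n\<in>{M..}. f n)" .
qed

theorem corollary3p12:
  fixes tensor :: "'v::complete_lattice \<Rightarrow> 'v \<Rightarrow> 'v" and k :: 'v
    and a :: "'x \<Rightarrow> 'x \<Rightarrow> 'v" and s :: "nat \<Rightarrow> 'x" and x :: 'x
  assumes "quantale tensor k"
    and "V_category tensor k a"
    and "V_cauchy k a s"
  shows "(SUP N. INF n\<in>{N..}. a (s n) x) = (INF N. SUP n\<in>{N..}. a (s n) x)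
       \<and> (SUP N. INF n\<in>{N..}. a x (s n)) = (INF N. SUP n\<in>{N..}. a x (s n))"
proof -
  note q = assms(1)
  have comm: "\<And>u v. tensor u v = tensor v u" using q unfolding quantale_def by blast
  have unit: "\<And>u. tensor k u = u" using q unfolding quantale_def by blast
  have supr: "\<And>u S. tensor u (Sup S) = (SUP s\<in>S. tensor u s)" using q unfolding quantale_def by blast
  have tr: "\<And>x y z. tensor (a x y) (a y z) \<le> a x z" using assms(2) unfolding V_category_def by blast
  define c where "c N = (INF n\<in>{N..}. INF m\<in>{N..}. a (s n) (s m))" for N
  have kc: "k \<le> (SUP N. c N)" using assms(3) unfolding V_cauchy_def c_def by simp
  have cle: "c N \<le> a (s n) (s m)" if "n \<ge> N" "m \<ge> N" for N n m
  proof -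
    have "c N \<le> (INF m\<in>{N..}. a (s n) (s m))" unfolding c_def by (rule INF_lower) (use that in simp)
    also have "\<dots> \<le> a (s n) (s m)" by (rule INF_lower) (use that in simp)
    finally show ?thesis .
  qed
  have A: "(INF N. SUP n\<in>{N..}. a (s n) x) \<le> (SUP N. INF n\<in>{N..}. a (s n) x)" (is "?L \<le> ?R")
  proof -
    have "?L = tensor k ?L" by (simp add: unit)
    also have "\<dots> \<le> tensor (SUP N. c N) ?L" using q_mono2[OF q kc order_refl] .
    also have "\<dots> = (SUP N. tensor (c N) ?L)" using q_supl[OF q] by (simp add: image_image)
    also have "\<dots> \<le> ?R"
    proof (rule SUP_mono)
      fix N
      have "tensor (c N) ?L \<le> (INF n\<in>{N..}. a (s n) x)"
      proof (rule INF_greatest)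
        fix n assume n: "n \<in> {N..}"
        have "tensor (c N) ?L \<le> tensor (c N) (SUP m\<in>{N..}. a (s m) x)"
          by (rule q_mono[OF q]) (rule INF_lower, simp)
        also have "\<dots> = (SUP m\<in>{N..}. tensor (c N) (a (s m) x))" using supr by (simp add: image_image)
        also have "\<dots> \<le> a (s n) x"
        proof (rule SUP_least)
          fix m assume m: "m \<in> {N..}"
          have "tensor (c N) (a (s m) x) \<le> tensor (a (s n) (s m)) (a (s m) x)"
            by (rule q_mono2[OF q]) (use n m cle in auto)
          also have "\<dots> \<le> a (s n) x" by (rule tr)
          finally show "tensor (c N) (a (s m) x) \<le> a (s n) x" .
        qed
        finally show "tensor (c N) ?L \<le> a (s n) x" .
      qed
      then show "\<exists>M\<in>UNIV. tensor (c N) ?L \<le> (INF n\<in>{M..}. a (s n) x)" by blast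
    qed
    finally show ?thesis .
  qed
  have B: "(INF N. SUP n\<in>{N..}. a x (s n)) \<le> (SUP N. INF n\<in>{N..}. a x (s n))" (is "?L \<le> ?R")
  proof -
    have "?L = tensor ?L k" by (simp add: unit comm)
    also have "\<dots> \<le> tensor ?L (SUP N. c N)" using q_mono2[OF q order_refl kc] .
    also have "\<dots> = (SUP N. tensor ?L (c N))" using supr by (simp add: image_image)
    also have "\<dots> \<le> ?R"
    proof (rule SUP_mono)
      fix N
      have "tensor ?L (c N) \<le> (INF n\<in>{N..}. a x (s n))"
      proof (rule INF_greatest)
        fix n assume n: "n \<in> {N..}"
        have "tensor ?L (c N) \<le> tensor (SUP m\<in>{N..}. a x (s m)) (c N)"
          by (rule q_mono2[OF q]) (rule INF_lower, simp, simp)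
        also have "\<dots> = (SUP m\<in>{N..}. tensor (a x (s m)) (c N))" using q_supl[OF q] by (simp add: image_image)
        also have "\<dots> \<le> a x (s n)"
        proof (rule SUP_least)
          fix m assume m: "m \<in> {N..}"
          have "tensor (a x (s m)) (c N) \<le> tensor (a x (s m)) (a (s m) (s n))"
            by (rule q_mono2[OF q]) (use n m cle in auto)
          also have "\<dots> \<le> a x (s n)" by (rule tr)
          finally show "tensor (a x (s m)) (c N) \<le> a x (s n)" .
        qed
        finally show "tensor ?L (c N) \<le> a x (s n)" .
      qed
      then show "\<exists>M\<in>UNIV. tensor ?L (c N) \<le> (INF n\<in>{M..}. a x (s n))" by blast
    qed
    finally show ?thesis .
  qed
  show ?thesis using A B liminf_le_limsup[of "\<lambda>n. a (s n) x"] liminf_le_limsup[of "\<lambda>n. a x (s n)"]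
    by (meson order_antisym)
qed

end
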